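(* Let $\mathcal{X},\mathcal{A}$ be finite sets, let $P_{A|X}$ be a channel, and for $n\ge1$ let $P^{\times n}_{XAB}(x^n,a^n,b^n)=|\mathcal{X}|^{-n}\prod_{i=1}^n P_{A|X}(a_i|x_i)P_{A|X}(b_i|x_i)$ on $\mathcal{X}^n\times\mathcal{A}^n\times\mathcal{A}^n$. Let $\omega_{\mathrm{ns}}(n)=\sup_Q\sum_{x^n,a^n,b^n}P^{\times n}_{XAB}(x^n,a^n,b^n)Q(x^n,x^n|a^n,b^n)$, the supremum over all no-signalling conditional distributions $Q$. Then $$\limsup_{n\to\infty}\frac{\log\omega_{\mathrm{ns}}(n)}{n}\le\max_{Q_{XA}}\Big(I(X;A)_Q-2D(Q_{A|X}\,\|\,P_{A|X}\mid Q_X)\Big)-\log|\mathcal{X}|,$$ the maximum being over all probability distributions $Q_{XA}$ on $\mathcal{X}\times\mathcal{A}$.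
   Context: Logarithms are base $2$. A no-signalling conditional distribution is a conditional distribution $Q(y,z|a^n,b^n)$ on $\mathcal{X}^n\times\mathcal{X}^n$ given $(a^n,b^n)\in\mathcal{A}^n\times\mathcal{A}^n$ such that $\sum_y Q(y,z|a^n,b^n)$ does not depend on $a^n$ and $\sum_z Q(y,z|a^n,b^n)$ does not depend on $b^n$. $I(X;A)_Q=H(X)_Q+H(A)_Q-H(X,A)_Q$ (Shannon entropies); $D(P\|Q)=\sum_x P(x)\log\frac{P(x)}{Q(x)}$; $D(Q_{A|X}\|P_{A|X}\mid Q_X)=\sum_x Q_X(x)D(Q_{A|X=x}\|P_{A|X=x})$. *)

theory Defs
  imports "HOL-Analysis.Analysis"
begin

text \<open>Logarithms base 2; note log 2 0 = 0 in Isabelle, so p * log 2 p = 0 for p = 0.\<close>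

definition channel :: "('x::finite \<Rightarrow> 'a::finite \<Rightarrow> real) \<Rightarrow> bool" where
  "channel P \<longleftrightarrow> (\<forall>x a. P x a \<ge> 0) \<and> (\<forall>x. (\<Sum>a\<in>UNIV. P x a) = 1)"

definition seqs :: "nat \<Rightarrow> 'b list set" where
  "seqs n = {xs. length xs = n}"

definition Pn :: "('x::finite \<Rightarrow> 'a::finite \<Rightarrow> real) \<Rightarrow> nat \<Rightarrow> 'x list \<Rightarrow> 'a list \<Rightarrow> 'a list \<Rightarrow> real" where
  "Pn P n xs as bs = (1 / real CARD('x)) ^ n * (\<Prod>i<n. P (xs!i) (as!i) * P (xs!i) (bs!i))"

definition no_signalling ::
  "nat \<Rightarrow> ('x::finite list \<Rightarrow> 'x list \<Rightarrow> 'a::finite list \<Rightarrow> 'a list \<Rightarrow> real) \<Rightarrow> bool" where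
  "no_signalling n Q \<longleftrightarrow>
     (\<forall>y\<in>seqs n. \<forall>z\<in>seqs n. \<forall>a\<in>seqs n. \<forall>b\<in>seqs n. Q y z a b \<ge> 0) \<and>
     (\<forall>a\<in>seqs n. \<forall>b\<in>seqs n. (\<Sum>y\<in>seqs n. \<Sum>z\<in>seqs n. Q y z a b) = 1) \<and>
     (\<forall>z\<in>seqs n. \<forall>a\<in>seqs n. \<forall>a'\<in>seqs n. \<forall>b\<in>seqs n.
        (\<Sum>y\<in>seqs n. Q y z a b) = (\<Sum>y\<in>seqs n. Q y z a' b)) \<and>
     (\<forall>y\<in>seqs n. \<forall>a\<in>seqs n. \<forall>b\<in>seqs n. \<forall>b'\<in>seqs n.
        (\<Sum>z\<in>seqs n. Q y z a b) = (\<Sum>z\<in>seqs n. Q y z a b'))"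

definition omega_ns :: "('x::finite \<Rightarrow> 'a::finite \<Rightarrow> real) \<Rightarrow> nat \<Rightarrow> real" where
  "omega_ns P n = Sup {(\<Sum>xs\<in>seqs n. \<Sum>as\<in>seqs n. \<Sum>bs\<in>seqs n. Pn P n xs as bs * Q xs xs as bs)
                       | Q. no_signalling n Q}"

definition pdist :: "('b::finite \<Rightarrow> real) \<Rightarrow> bool" where
  "pdist p \<longleftrightarrow> (\<forall>v. p v \<ge> 0) \<and> (\<Sum>v\<in>UNIV. p v) = 1"

definition entropy :: "('b::finite \<Rightarrow> real) \<Rightarrow> real" where
  "entropy p = - (\<Sum>v\<in>UNIV. p v * log 2 (p v))"

definition margX :: "('x::finite \<times> 'a::finite \<Rightarrow> real) \<Rightarrow> 'x \<Rightarrow> real" where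
  "margX Q x = (\<Sum>a\<in>UNIV. Q (x, a))"

definition margA :: "('x::finite \<times> 'a::finite \<Rightarrow> real) \<Rightarrow> 'a \<Rightarrow> real" where
  "margA Q a = (\<Sum>x\<in>UNIV. Q (x, a))"

definition mutual_info :: "('x::finite \<times> 'a::finite \<Rightarrow> real) \<Rightarrow> real" where
  "mutual_info Q = entropy (margX Q) + entropy (margA Q) - entropy Q"

text \<open>Conditional relative entropy D(Q_{A|X} || P_{A|X} | Q_X); only meaningful (finite) when
  Q(x,a) > 0 implies P(a|x) > 0, see abs_cont.\<close>
definition cond_rel_entropy :: "('x::finite \<times> 'a::finite \<Rightarrow> real) \<Rightarrow> ('x \<Rightarrow> 'a \<Rightarrow> real) \<Rightarrow> real" where
  "cond_rel_entropy Q P = (\<Sum>x\<in>UNIV. margX Q x *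
      (\<Sum>a\<in>UNIV. (Q (x, a) / margX Q x) * log 2 ((Q (x, a) / margX Q x) / P x a)))"

definition abs_cont :: "('x::finite \<times> 'a::finite \<Rightarrow> real) \<Rightarrow> ('x \<Rightarrow> 'a \<Rightarrow> real) \<Rightarrow> bool" where
  "abs_cont Q P \<longleftrightarrow> (\<forall>x a. Q (x, a) > 0 \<longrightarrow> P x a > 0)"

end

theory Submission
  imports Defs
begin

definition Bv :: "('x::finite \<Rightarrow> 'a::finite \<Rightarrow> real) \<Rightarrow> ('x \<Rightarrow> real) \<Rightarrow> 'a \<Rightarrow> real" where
  "Bv P p a = (\<Sum>x\<in>UNIV. p x * (P x a)^2)"

definition phi :: "('x::finite \<Rightarrow> 'a::finite \<Rightarrow> real) \<Rightarrow> ('x \<Rightarrow> real) \<Rightarrow> real" where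
  "phi P p = (\<Sum>a\<in>UNIV. sqrt (Bv P p a))"

lemma exists_max:
  fixes P :: "'x::finite \<Rightarrow> 'a::finite \<Rightarrow> real"
  shows "\<exists>p. pdist p \<and> (\<forall>q. pdist q \<longrightarrow> phi P q \<le> phi P p)"
proof -
  define S where "S = {v::real^'x. (\<forall>i. 0 \<le> v$i) \<and> (\<Sum>i\<in>UNIV. v$i) = 1}"
  define f where "f = (\<lambda>v::real^'x. \<Sum>a\<in>UNIV. sqrt (\<Sum>x\<in>UNIV. v$x * (P x a)^2))"
  have cl: "closed S" unfolding S_def
    by (intro closed_Collect_conj closed_Collect_all closed_Collect_le closed_Collect_eq continuous_intros)
  have bd: "bounded S"
  proof -
    have "norm v \<le> 1" if "v \<in> S" for v
    proof -
      have "norm v \<le> (\<Sum>i\<in>UNIV. \<bar>v$i\<bar>)" by (rule norm_le_l1_cart)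
      also have "\<dots> = 1" using that unfolding S_def by simp
      finally show ?thesis .
    qed
    then show ?thesis unfolding bounded_iff by blast
  qed
  have cpt: "compact S" using cl bd by (simp add: compact_eq_bounded_closed)
  have ne: "(\<chi> i. 1 / real CARD('x)) \<in> S" unfolding S_def by simp
  have cont: "continuous_on S f" unfolding f_def by (intro continuous_intros)
  obtain v where v: "v \<in> S" "\<forall>y\<in>S. f y \<le> f v"
    using continuous_attains_sup[OF cpt _ cont] ne by blast
  show ?thesis
  proof (intro exI[of _ "\<lambda>i. v$i"] conjI allI impI)
    show "pdist (\<lambda>i. v$i)" using v(1) unfolding S_def pdist_def by simp
    fix q :: "'x \<Rightarrow> real" assume q: "pdist q"
    have "(\<chi> i. q i) \<in> S" using q unfolding S_def pdist_def by simp
    then have "f (\<chi> i. q i) \<le> f v" using v(2) by blast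
    then show "phi P q \<le> phi P (\<lambda>i. v$i)" unfolding f_def phi_def Bv_def by simp
  qed
qed

lemma sqrt_lower:
  fixes y B :: real
  assumes "0 \<le> y" "0 \<le> B"
  shows "sqrt B + (y - B)/(2* sqrt B) - (y-B)^2/(2* B* sqrt B) \<le> sqrt y"
proof (cases "B = 0")
  case True
  have "0 \<le> sqrt y" using assms(1) by simp
  then show ?thesis using True by simp
next
  case False
  define s where "s = sqrt y"
  define b where "b = sqrt B"
  have b0: "b > 0" using False assms unfolding b_def by simp
  have s0: "s \<ge> 0" unfolding s_def using assms by simp
  have yB: "y = s^2" "B = b^2" using assms unfolding s_def b_def by simp_all
  have key: "2* b^3*(b + (s^2-b^2)/(2* b) - (s^2-b^2)^2/(2* b^2* b)) \<le> 2* b^3* s"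
  proof -
    have "2* b^3*(b + (s^2-b^2)/(2* b) - (s^2-b^2)^2/(2* b^2* b)) = 2* b^4 + b^2*(s^2-b^2) - (s^2-b^2)^2"
      using b0 by (simp add: field_simps power2_eq_square power3_eq_cube power4_eq_xxxx)
    moreover have "2* b^4 + b^2*(s^2-b^2) - (s^2-b^2)^2 - 2* b^3* s = (s-b)^2*(b^2 - (s+b)^2)"
      by (simp add: algebra_simps power2_eq_square power3_eq_cube power4_eq_xxxx)
    moreover have "(s-b)^2*(b^2 - (s+b)^2) \<le> 0"
    proof (rule mult_nonneg_nonpos)
      have h: "b^2 - (s+b)^2 = -(s* s + 2 * s * b)" by (simp add: power2_eq_square algebra_simps)
      have "s* s + 2 * s * b \<ge> 0" using s0 b0 by simp
      then show "b^2 - (s+b)^2 \<le> 0" unfolding h by simp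
    qed simp
    ultimately show ?thesis by linarith
  qed
  have "b + (s^2-b^2)/(2* b) - (s^2-b^2)^2/(2* b^2* b) \<le> s"
    using key b0 by (simp add: mult_le_cancel_left_pos)
  then show ?thesis using yB unfolding s_def[symmetric] b_def[symmetric] by simp
qed

lemma Bv_nonneg: "\<forall>x a. P x a \<ge> 0 \<Longrightarrow> pdist p \<Longrightarrow> Bv P p a \<ge> 0"
  unfolding Bv_def pdist_def by (intro sum_nonneg) auto

lemma Bv_pt:
  "Bv P (\<lambda>y. (1-t)* p y + t*(if y = x0 then 1 else 0)) a = (1-t)* Bv P p a + t*(P x0 a)^2"
proof -
  have "Bv P (\<lambda>y. (1-t)* p y + t*(if y = x0 then 1 else 0)) a
     = (\<Sum>x\<in>UNIV. (1-t) * (p x * (P x a)^2) + t * (if x = x0 then (P x a)^2 else 0))"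
    unfolding Bv_def by (intro sum.cong) (auto simp: algebra_simps)
  also have "\<dots> = (1-t)* Bv P p a + t*(P x0 a)^2"
    unfolding Bv_def by (simp add: sum.distrib sum_distrib_left[symmetric])
  finally show ?thesis .
qed

lemma pdist_pt:
  assumes "pdist p" "0 \<le> t" "t \<le> 1"
  shows "pdist (\<lambda>y. (1-t)* p y + t*(if y = x0 then 1 else 0))"
  using assms unfolding pdist_def by (simp add: sum.distrib sum_distrib_left[symmetric])

lemma first_order_a:
  fixes P :: "'x::finite \<Rightarrow> 'a::finite \<Rightarrow> real"
  assumes Pnn: "\<forall>x a. P x a \<ge> 0" and pd: "pdist p"
    and mx: "\<forall>q. pdist q \<longrightarrow> phi P q \<le> phi P p"
    and B0: "Bv P p a0 = 0"
  shows "P x0 a0 = 0"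
proof (rule ccontr)
  assume ne: "P x0 a0 \<noteq> 0"
  define pp where "pp = (P x0 a0)^2"
  define ph where "ph = phi P p"
  have pp0: "pp > 0" using ne unfolding pp_def by simp
  have Bnn: "\<And>a. Bv P p a \<ge> 0" unfolding Bv_def using Pnn pd unfolding pdist_def by (intro sum_nonneg) auto
  have ph0: "ph \<ge> 0" unfolding ph_def phi_def using Bnn by (intro sum_nonneg) simp
  define t where "t = pp / (ph^2 + pp)"
  have t0: "t > 0" using pp0 ph0 unfolding t_def by (simp add: add_nonneg_pos)
  have den: "ph^2 + pp > 0" using pp0 ph0 by (simp add: add_nonneg_pos)
  have t1: "t \<le> 1" using den pp0 ph0 unfolding t_def by (simp add: field_simps)
  define pt where "pt = (\<lambda>y. (1-t)* p y + t*(if y = x0 then 1 else 0))"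
  have Bpt: "\<And>a. Bv P pt a = (1-t)* Bv P p a + t*(P x0 a)^2" unfolding pt_def by (rule Bv_pt)
  have tm: "(1-t) * sqrt (Bv P p a) \<le> sqrt (Bv P pt a)" for a
  proof (rule real_le_rsqrt)
    have "((1-t) * sqrt (Bv P p a))^2 = (1-t)^2 * Bv P p a"
      using Bnn[of a] by (simp add: power_mult_distrib)
    also have "\<dots> \<le> (1-t) * Bv P p a"
    proof (intro mult_right_mono)
      show "(1-t)^2 \<le> 1-t" using t0 t1 by (simp add: power2_eq_square mult_left_le)
    qed (rule Bnn)
    also have "\<dots> \<le> Bv P pt a" using Bpt[of a] t0 by simp
    finally show "((1-t) * sqrt (Bv P p a))^2 \<le> Bv P pt a" .
  qed
  have term0: "sqrt (t* pp) \<le> sqrt (Bv P pt a0)" using Bpt[of a0] B0 unfolding pp_def by simp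
  have "phi P pt = sqrt (Bv P pt a0) + (\<Sum>a\<in>UNIV-{a0}. sqrt (Bv P pt a))"
    unfolding phi_def by (simp add: sum.remove)
  also have "\<dots> \<ge> sqrt (t* pp) + (\<Sum>a\<in>UNIV-{a0}. (1-t) * sqrt (Bv P p a))"
    using term0 tm by (intro add_mono sum_mono) auto
  finally have "sqrt (t* pp) + (\<Sum>a\<in>UNIV-{a0}. (1-t) * sqrt (Bv P p a)) \<le> phi P pt" .
  moreover have "(\<Sum>a\<in>UNIV-{a0}. (1-t) * sqrt (Bv P p a)) = (1-t) * ph"
    unfolding ph_def phi_def using B0 by (simp add: sum_diff1 sum_distrib_left[symmetric])
  moreover have "phi P pt \<le> ph" unfolding ph_def using mx pdist_pt[OF pd, of t x0] t0 t1 pt_def by auto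
  ultimately have "sqrt (t* pp) \<le> t * ph" by (simp add: algebra_simps)
  then have "(sqrt (t* pp))^2 \<le> (t* ph)^2" using t0 pp0 by (intro power_mono) auto
  then have le: "t* pp \<le> t^2 * ph^2" using t0 pp0 by (simp add: power_mult_distrib)
  have "t * ph^2 < pp"
  proof -
    have "t * ph^2 = pp * (ph^2 / (ph^2 + pp))" unfolding t_def by simp
    also have "ph^2 / (ph^2 + pp) < 1" using pp0 ph0 by (simp add: add_nonneg_pos)
    then have "pp * (ph^2 / (ph^2 + pp)) < pp * 1" using pp0 by (intro mult_strict_left_mono) auto
    finally show ?thesis by simp
  qed
  then have "t * (t* ph^2) < t * pp" using t0 by (intro mult_strict_left_mono) auto
  then show False using le by (simp add: power2_eq_square algebra_simps)
qed

lemma div_helper: "(a::real) * b / (2 * c) = a / 2 * (b / c)"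
  by simp

lemma first_order_b:
  fixes P :: "'x::finite \<Rightarrow> 'a::finite \<Rightarrow> real"
  assumes Pnn: "\<forall>x a. P x a \<ge> 0" and pd: "pdist p"
    and mx: "\<forall>q. pdist q \<longrightarrow> phi P q \<le> phi P p"
  shows "(\<Sum>a\<in>UNIV. (P x0 a)^2 / sqrt (Bv P p a)) \<le> phi P p"
proof -
  define B where "B = Bv P p"
  define q where "q = (\<lambda>a. (P x0 a)^2)"
  have Bnn: "\<And>a. B a \<ge> 0" unfolding B_def Bv_def using Pnn pd unfolding pdist_def by (intro sum_nonneg) auto
  define D where "D = (\<Sum>a\<in>UNIV. (q a - B a) / sqrt (B a))"
  define K where "K = (\<Sum>a\<in>UNIV. (q a - B a)^2 / (2 * B a * sqrt (B a)))"
  have K0: "K \<ge> 0" unfolding K_def using Bnn by (intro sum_nonneg divide_nonneg_nonneg) auto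
  have step: "t * D / 2 \<le> t^2 * K" if t0: "0 < t" and t1: "t \<le> 1" for t
  proof -
    define pt where "pt = (\<lambda>y. (1-t) * p y + t * (if y = x0 then 1 else 0))"
    have Bpt: "\<And>a. Bv P pt a = (1-t) * B a + t * q a" unfolding pt_def B_def q_def by (rule Bv_pt)
    have ypos: "\<And>a. Bv P pt a \<ge> 0" unfolding Bv_def using Pnn pdist_pt[OF pd, of t x0] t0 t1
      unfolding pt_def pdist_def by (intro sum_nonneg) auto
    have "phi P pt \<le> phi P p" using mx pdist_pt[OF pd, of t x0] t0 t1 pt_def by auto
    moreover have "phi P pt \<ge> (\<Sum>a\<in>UNIV. sqrt (B a) + t / 2 * ((q a - B a) / sqrt (B a))
                                 - t^2 * ((q a - B a)^2 / (2 * B a * sqrt (B a))))"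
      unfolding phi_def
    proof (intro sum_mono)
      fix a
      have yB: "Bv P pt a - B a = t * (q a - B a)" using Bpt[of a] by (simp add: algebra_simps)
      have "sqrt (B a) + t / 2 * ((q a - B a) / sqrt (B a)) - t^2 * ((q a - B a)^2 / (2 * B a * sqrt (B a)))
          = sqrt (B a) + (Bv P pt a - B a) / (2 * sqrt (B a)) - (Bv P pt a - B a)^2 / (2 * B a * sqrt (B a))"
        unfolding yB by (simp add: power_mult_distrib)
      also have "\<dots> \<le> sqrt (Bv P pt a)" by (rule sqrt_lower[OF ypos Bnn])
      finally show "sqrt (B a) + t / 2 * ((q a - B a) / sqrt (B a)) - t^2 * ((q a - B a)^2 / (2 * B a * sqrt (B a)))
           \<le> sqrt (Bv P pt a)" .
    qed
    moreover have "(\<Sum>a\<in>UNIV. sqrt (B a) + t / 2 * ((q a - B a) / sqrt (B a))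
                                 - t^2 * ((q a - B a)^2 / (2 * B a * sqrt (B a))))
          = phi P p + t / 2 * D - t^2 * K"
      unfolding D_def K_def phi_def B_def
      by (simp add: sum.distrib sum_subtractf sum_distrib_left)
    ultimately show ?thesis by simp
  qed
  have D0: "D \<le> 0"
  proof (rule ccontr)
    assume "\<not> D \<le> 0"
    then have Dp: "D > 0" by simp
    define t where "t = min 1 (D / (4 * K + 1))"
    have t0: "t > 0" unfolding t_def using Dp K0 by simp
    have t1: "t \<le> 1" unfolding t_def by simp
    have tD: "t \<le> D / (4 * K + 1)" unfolding t_def by simp
    have "t * D / 2 \<le> t^2 * K" using step[OF t0 t1] .
    then have "t * D \<le> t * (2 * t * K)" by (simp add: power2_eq_square algebra_simps)
    then have "D \<le> 2 * t * K" using t0 by simp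
    also have "\<dots> \<le> 2 * (D / (4 * K + 1)) * K" using tD K0 by (intro mult_right_mono) auto
    also have "\<dots> < D"
    proof -
      have "2 * (D / (4 * K + 1)) * K = D * (2 * K / (4 * K + 1))" by simp
      also have "2 * K / (4 * K + 1) < 1" using K0 by simp
      then have "D * (2 * K / (4 * K + 1)) < D * 1" using Dp by (intro mult_strict_left_mono) auto
      finally show ?thesis by simp
    qed
    finally show False by simp
  qed
  have "D = (\<Sum>a\<in>UNIV. q a / sqrt (B a)) - (\<Sum>a\<in>UNIV. B a / sqrt (B a))"
    unfolding D_def by (simp add: diff_divide_distrib sum_subtractf)
  also have "(\<Sum>a\<in>UNIV. B a / sqrt (B a)) = phi P p"
    unfolding phi_def B_def using Bnn unfolding B_def by (simp add: real_div_sqrt)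
  finally show ?thesis using D0 unfolding q_def B_def by simp
qed

lemma sum_pair: "(\<Sum>v\<in>UNIV. g v) = (\<Sum>x\<in>(UNIV::'b::finite set). \<Sum>a\<in>(UNIV::'c::finite set). g (x,a))"
  unfolding sum.cartesian_product UNIV_Times_UNIV by simp

lemma term_calc:
  fixes px Pxa ph r :: real
  assumes px: "px > 0" and Pp: "Pxa > 0" and php: "ph > 0" and rp: "r > 0"
  shows "(px * Pxa^2 / (ph * r)) * log 2 (px * Pxa^2 / (ph * r)) - (px * Pxa^2 / (ph * r)) * log 2 px
     - (px * Pxa^2 / (ph * r)) * log 2 (r / ph)
     - 2 * ((px * Pxa^2 / (ph * r)) * log 2 (((px * Pxa^2 / (ph * r)) / px) / Pxa))
     = (px * Pxa^2 / (ph * r)) * (2 * log 2 ph)"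
proof -
  define q where "q = px * Pxa^2 / (ph * r)"
  have n1: "px * Pxa^2 > 0" using px Pp by simp
  have n2: "ph * r > 0" using php rp by simp
  have l1: "log 2 q = log 2 px + 2 * log 2 Pxa - log 2 ph - log 2 r"
    unfolding q_def using n1 n2 px Pp php rp by (simp add: log_mult_pos log_divide_pos log_nat_power)
  have l2: "(q / px) / Pxa = Pxa / (ph * r)" unfolding q_def using px Pp by (simp add: field_simps power2_eq_square)
  have l3: "log 2 (Pxa / (ph * r)) = log 2 Pxa - log 2 ph - log 2 r"
    using n2 Pp php rp by (simp add: log_mult_pos log_divide_pos)
  have l4: "log 2 (r / ph) = log 2 r - log 2 ph" using php rp by (simp add: log_divide_pos)
  show ?thesis unfolding q_def[symmetric] l2 l1 l3 l4 by (simp add: algebra_simps)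
qed

lemma Q_props:
  fixes P :: "'x::finite \<Rightarrow> 'a::finite \<Rightarrow> real"
  assumes Pnn: "\<forall>x a. P x a \<ge> 0" and P1: "\<forall>x. (\<Sum>a\<in>UNIV. P x a) = 1"
    and pd: "pdist p" and mx: "\<forall>q. pdist q \<longrightarrow> phi P q \<le> phi P p"
  defines "ph \<equiv> phi P p" and "r \<equiv> \<lambda>a. sqrt (Bv P p a)"
  defines "Q \<equiv> \<lambda>(x,a). p x * (P x a)^2 / (ph * r a)"
  shows "ph > 0" and "pdist Q" and "abs_cont Q P"
    and "mutual_info Q - 2 * cond_rel_entropy Q P = 2 * log 2 ph"
proof -
  have pnn: "\<And>x. p x \<ge> 0" and p1: "(\<Sum>x\<in>UNIV. p x) = 1" using pd unfolding pdist_def by auto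
  have Bnn: "\<And>a. Bv P p a \<ge> 0" unfolding Bv_def using Pnn pnn by (intro sum_nonneg) auto
  have rnn: "\<And>a. r a \<ge> 0" unfolding r_def using Bnn by simp
  have FOa: "\<And>x a. r a = 0 \<Longrightarrow> P x a = 0"
    using first_order_a[OF Pnn pd mx] Bnn unfolding r_def by simp
  define S where "S = (\<lambda>x. \<Sum>a\<in>UNIV. (P x a)^2 / r a)"
  have FOb: "\<And>x. S x \<le> ph" unfolding S_def r_def ph_def using first_order_b[OF Pnn pd mx] by blast
  have sumS: "(\<Sum>x\<in>UNIV. p x * S x) = ph"
  proof -
    have "(\<Sum>x\<in>UNIV. p x * S x) = (\<Sum>x\<in>UNIV. \<Sum>a\<in>UNIV. p x * (P x a)^2 / r a)"
      unfolding S_def by (simp add: sum_distrib_left)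
    also have "\<dots> = (\<Sum>a\<in>UNIV. \<Sum>x\<in>UNIV. p x * (P x a)^2 / r a)"
      by (rule sum.swap)
    also have "\<dots> = (\<Sum>a\<in>UNIV. (\<Sum>x\<in>UNIV. p x * (P x a)^2) / r a)"
      by (simp add: sum_divide_distrib)
    also have "\<dots> = (\<Sum>a\<in>UNIV. r a)"
      unfolding r_def Bv_def[symmetric] using Bnn by (simp add: real_div_sqrt)
    finally show ?thesis unfolding ph_def phi_def r_def .
  qed
  have Spos: "S x = ph" if "p x > 0" for x
  proof -
    have "(\<Sum>x\<in>UNIV. p x * (ph - S x)) = (\<Sum>x\<in>UNIV. p x) * ph - (\<Sum>x\<in>UNIV. p x * S x)"
      by (simp add: right_diff_distrib sum_subtractf sum_distrib_right)
    then have "(\<Sum>x\<in>UNIV. p x * (ph - S x)) = 0" using sumS p1 by simp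
    moreover have "\<forall>x\<in>UNIV. p x * (ph - S x) \<ge> 0" using pnn FOb by simp
    ultimately have "p x * (ph - S x) = 0" using sum_nonneg_eq_0_iff[of UNIV "\<lambda>x. p x * (ph - S x)"] by simp
    then show ?thesis using that by simp
  qed
  show php: "ph > 0"
  proof (rule ccontr)
    assume "\<not> ph > 0"
    moreover have "ph \<ge> 0" unfolding ph_def phi_def using Bnn by (intro sum_nonneg) simp
    ultimately have "ph = 0" by simp
    moreover have "ph = (\<Sum>a\<in>UNIV. r a)" unfolding ph_def phi_def r_def by simp
    ultimately have hs: "(\<Sum>a\<in>UNIV. r a) = 0" by simp
    have "\<forall>a\<in>UNIV. r a = 0"
      using sum_nonneg_eq_0_iff[of UNIV r] rnn hs by simp
    then have "\<And>x a. P x a = 0" using FOa by blast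
    then show False using P1 by simp
  qed
  have Qnn: "Q (x,a) \<ge> 0" for x a
  proof -
    have "p x * (P x a)^2 \<ge> 0" using pnn[of x] by simp
    moreover have "ph * r a \<ge> 0" using rnn[of a] php by simp
    ultimately show ?thesis unfolding Q_def by (simp add: divide_nonneg_nonneg)
  qed
  have mX: "margX Q = p"
  proof
    fix x
    have "margX Q x = (\<Sum>a\<in>UNIV. (p x / ph) * ((P x a)^2 / r a))" unfolding margX_def Q_def
      by (intro sum.cong) auto
    also have "\<dots> = (p x / ph) * S x" unfolding S_def by (simp add: sum_distrib_left)
    also have "\<dots> = p x"
    proof (cases "p x = 0")
      case True then show ?thesis by simp
    next
      case False
      then have "S x = ph" using Spos[of x] pnn[of x] by simp
      then show ?thesis using php by simp
    qed
    finally show "margX Q x = p x" .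
  qed
  have mA: "margA Q = (\<lambda>a. r a / ph)"
  proof
    fix a
    have "margA Q a = Bv P p a / (ph * r a)" unfolding margA_def Q_def Bv_def
      by (simp add: sum_divide_distrib)
    also have "\<dots> = (Bv P p a / sqrt (Bv P p a)) / ph" unfolding r_def by (simp add: mult.commute)
    also have "\<dots> = r a / ph" unfolding r_def using Bnn[of a] by (simp add: real_div_sqrt)
    finally show "margA Q a = r a / ph" .
  qed
  have sQ: "(\<Sum>x\<in>UNIV. \<Sum>a\<in>UNIV. Q (x,a)) = 1" using p1 unfolding mX[symmetric] margX_def by simp
  show "pdist Q" unfolding pdist_def using Qnn sQ sum_pair[of Q] by auto
  show "abs_cont Q P" unfolding abs_cont_def
  proof (intro allI impI)
    fix x a assume "Q (x,a) > 0"
    then have "P x a \<noteq> 0" unfolding Q_def by auto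
    then show "P x a > 0" using Pnn by (simp add: less_le)
  qed
  have Qz: "Q (x,a) = 0" if "p x = 0 \<or> P x a = 0 \<or> r a = 0" for x a
    using that unfolding Q_def by auto
  have eQ: "entropy Q = - (\<Sum>x\<in>UNIV. \<Sum>a\<in>UNIV. Q (x,a) * log 2 (Q (x,a)))"
    unfolding entropy_def using sum_pair[of "\<lambda>v. Q v * log 2 (Q v)"] by simp
  have eX: "entropy (margX Q) = - (\<Sum>x\<in>UNIV. \<Sum>a\<in>UNIV. Q (x,a) * log 2 (p x))"
  proof -
    have "(\<Sum>a\<in>UNIV. Q (x,a) * log 2 (p x)) = p x * log 2 (p x)" for x
    proof -
      have "(\<Sum>a\<in>UNIV. Q (x,a) * log 2 (p x)) = (\<Sum>a\<in>UNIV. Q (x,a)) * log 2 (p x)"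
        by (simp add: sum_distrib_right)
      also have "(\<Sum>a\<in>UNIV. Q (x,a)) = p x" using fun_cong[OF mX, of x] unfolding margX_def .
      finally show ?thesis .
    qed
    then show ?thesis unfolding entropy_def mX by simp
  qed
  have eA: "entropy (margA Q) = - (\<Sum>x\<in>UNIV. \<Sum>a\<in>UNIV. Q (x,a) * log 2 (r a / ph))"
  proof -
    have "(\<Sum>x\<in>UNIV. Q (x,a) * log 2 (r a / ph)) = r a / ph * log 2 (r a / ph)" for a
    proof -
      have "(\<Sum>x\<in>UNIV. Q (x,a) * log 2 (r a / ph)) = (\<Sum>x\<in>UNIV. Q (x,a)) * log 2 (r a / ph)"
        by (simp add: sum_distrib_right)
      also have "(\<Sum>x\<in>UNIV. Q (x,a)) = r a / ph" using fun_cong[OF mA, of a] unfolding margA_def .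
      finally show ?thesis .
    qed
    then have "(\<Sum>a\<in>UNIV. \<Sum>x\<in>UNIV. Q (x,a) * log 2 (r a / ph)) = (\<Sum>a\<in>UNIV. r a / ph * log 2 (r a / ph))"
      by simp
    moreover have "(\<Sum>a\<in>UNIV. \<Sum>x\<in>UNIV. Q (x,a) * log 2 (r a / ph)) = (\<Sum>x\<in>UNIV. \<Sum>a\<in>UNIV. Q (x,a) * log 2 (r a / ph))"
      by (rule sum.swap)
    ultimately show ?thesis unfolding entropy_def mA by simp
  qed
  have eD: "cond_rel_entropy Q P = (\<Sum>x\<in>UNIV. \<Sum>a\<in>UNIV. Q (x,a) * log 2 ((Q (x,a) / p x) / P x a))"
    unfolding cond_rel_entropy_def mX
  proof (intro sum.cong refl)
    fix x
    show "p x * (\<Sum>a\<in>UNIV. Q (x,a) / p x * log 2 (Q (x,a) / p x / P x a))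
        = (\<Sum>a\<in>UNIV. Q (x,a) * log 2 (Q (x,a) / p x / P x a))"
    proof (cases "p x = 0")
      case True then show ?thesis using Qz by simp
    next
      case False then show ?thesis by (simp add: sum_distrib_left)
    qed
  qed
  have tm: "Q (x,a) * log 2 (Q (x,a)) - Q (x,a) * log 2 (p x) - Q (x,a) * log 2 (r a / ph)
            - 2 * (Q (x,a) * log 2 ((Q (x,a) / p x) / P x a)) = Q (x,a) * (2 * log 2 ph)" for x a
  proof (cases "p x = 0 \<or> P x a = 0 \<or> r a = 0")
    case True then show ?thesis using Qz by simp
  next
    case False
    then have "p x > 0" "P x a > 0" "r a > 0" using pnn[of x] Pnn rnn[of a] by (auto simp: less_le)
    then show ?thesis unfolding Q_def using term_calc[of "p x" "P x a" ph "r a"] php by simp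
  qed
  have "mutual_info Q - 2 * cond_rel_entropy Q P
      = (\<Sum>x\<in>UNIV. \<Sum>a\<in>UNIV. Q (x,a) * log 2 (Q (x,a)) - Q (x,a) * log 2 (p x) - Q (x,a) * log 2 (r a / ph)
            - 2 * (Q (x,a) * log 2 ((Q (x,a) / p x) / P x a)))"
    unfolding mutual_info_def eQ eX eA eD by (simp add: sum_subtractf sum_distrib_left)
  also have "\<dots> = (\<Sum>x\<in>UNIV. \<Sum>a\<in>UNIV. Q (x,a) * (2 * log 2 ph))" using tm by simp
  also have "\<dots> = 2 * log 2 ph" using sQ by (simp add: sum_distrib_right[symmetric])
  finally show "mutual_info Q - 2 * cond_rel_entropy Q P = 2 * log 2 ph" .
qed

lemma seqs_Suc: "seqs (Suc n) = (\<lambda>(a,as). a#as) ` (UNIV \<times> seqs n)"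
  unfolding seqs_def by (auto simp: length_Suc_conv image_iff)

lemma finite_seqs[simp]: "finite (seqs n :: 'a::finite list set)"
  using finite_lists_length_eq[of "UNIV::'a set" n] unfolding seqs_def by simp

lemma sum_seqs_prod:
  fixes f :: "nat \<Rightarrow> 'a::finite \<Rightarrow> real"
  shows "(\<Sum>as\<in>seqs n. \<Prod>i<n. f i (as!i)) = (\<Prod>i<n. \<Sum>a\<in>UNIV. f i a)"
proof (induction n arbitrary: f)
  case 0
  have "seqs 0 = {[]}" unfolding seqs_def by auto
  show ?case unfolding \<open>seqs 0 = {[]}\<close> by simp
next
  case (Suc n)
  have inj: "inj_on (\<lambda>(a,as). a#as) (UNIV \<times> seqs n)" by (auto simp: inj_on_def)
  have "(\<Sum>as\<in>seqs (Suc n). \<Prod>i<Suc n. f i (as!i))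
      = (\<Sum>(a,as)\<in>UNIV \<times> seqs n. \<Prod>i<Suc n. f i ((a#as)!i))"
    unfolding seqs_Suc by (subst sum.reindex[OF inj]) (simp add: case_prod_unfold)
  also have "\<dots> = (\<Sum>a\<in>UNIV. \<Sum>as\<in>seqs n. f 0 a * (\<Prod>i<n. f (Suc i) (as!i)))"
    by (subst sum.cartesian_product[symmetric]) (simp add: prod.lessThan_Suc_shift del: prod.lessThan_Suc)
  also have "\<dots> = (\<Sum>a\<in>UNIV. f 0 a * (\<Prod>i<n. \<Sum>a\<in>UNIV. f (Suc i) a))"
    by (simp add: sum_distrib_left[symmetric] Suc.IH[of "\<lambda>i. f (Suc i)"])
  also have "\<dots> = (\<Prod>i<Suc n. \<Sum>a\<in>UNIV. f i a)"
    by (simp add: prod.lessThan_Suc_shift sum_distrib_right del: prod.lessThan_Suc)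
  finally show ?case .
qed


lemma lemK:
  fixes P :: "'x::finite \<Rightarrow> 'a::finite \<Rightarrow> real" and R :: "'a \<Rightarrow> real"
  assumes Pnn: "\<forall>x a. P x a \<ge> 0" and Rnn: "\<forall>a. R a \<ge> 0" and Rs: "(\<Sum>a\<in>UNIV. R a) = 1"
    and RP: "\<forall>x a. R a = 0 \<longrightarrow> P x a = 0" and Rc: "\<forall>x. (\<Sum>a\<in>UNIV. (P x a)^2 / R a) \<le> c"
    and fnn: "\<forall>xs\<in>seqs n. \<forall>as\<in>seqs n. f xs as \<ge> 0"
    and fs: "\<forall>as\<in>seqs n. (\<Sum>xs\<in>seqs n. f xs as) = 1"
  shows "(\<Sum>xs\<in>seqs n. (\<Sum>as\<in>seqs n. (\<Prod>i<n. P (xs!i) (as!i)) * sqrt (f xs as))^2) \<le> c^n"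
proof -
  have c0: "c \<ge> 0"
  proof -
    have "0 \<le> (\<Sum>a\<in>UNIV. (P undefined a)^2 / R a)" using Rnn by (intro sum_nonneg divide_nonneg_nonneg) auto
    then show ?thesis using Rc by (meson order_trans)
  qed
  define Rn where "Rn = (\<lambda>as::'a list. \<Prod>i<n. R (as!i))"
  have Rnnn: "\<And>as. Rn as \<ge> 0" unfolding Rn_def using Rnn by (intro prod_nonneg) auto
  have sumRn: "(\<Sum>as\<in>seqs n. Rn as) = 1"
    unfolding Rn_def using sum_seqs_prod[of "\<lambda>i a. R a" n] Rs by simp
  define pp where "pp = (\<lambda>xs as. \<Prod>i<n. P (xs!i) (as!i))"
  have A: "(\<Sum>as\<in>seqs n. pp xs as * sqrt (f xs as))^2 \<le> c^n * (\<Sum>as\<in>seqs n. Rn as * f xs as)"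
    if xs: "xs \<in> seqs n" for xs
  proof -
    define F where "F = (\<lambda>as. pp xs as / sqrt (Rn as))"
    define G where "G = (\<lambda>as. sqrt (Rn as) * sqrt (f xs as))"
    have FG: "pp xs as * sqrt (f xs as) = F as * G as" for as
    proof (cases "Rn as = 0")
      case True
      then obtain i where i: "i < n" "R (as!i) = 0" unfolding Rn_def by auto
      then have "P (xs!i) (as!i) = 0" using RP by blast
      then have "pp xs as = 0" unfolding pp_def using i(1) by (auto intro: prod_zero)
      then show ?thesis unfolding F_def G_def by simp
    next
      case False
      then have "sqrt (Rn as) > 0" using Rnnn[of as] by simp
      then show ?thesis unfolding F_def G_def by simp
    qed
    have "(\<Sum>as\<in>seqs n. pp xs as * sqrt (f xs as))^2 = (\<Sum>as\<in>seqs n. F as * G as)^2"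
      using FG by simp
    also have "\<dots> \<le> (\<Sum>as\<in>seqs n. (F as)^2) * (\<Sum>as\<in>seqs n. (G as)^2)"
      by (rule Cauchy_Schwarz_ineq_sum)
    also have "(\<Sum>as\<in>seqs n. (G as)^2) = (\<Sum>as\<in>seqs n. Rn as * f xs as)"
      unfolding G_def using fnn xs Rnnn by (intro sum.cong refl) (simp add: power_mult_distrib)
    also have "(\<Sum>as\<in>seqs n. (F as)^2) = (\<Sum>as\<in>seqs n. \<Prod>i<n. (P (xs!i) (as!i))^2 / R (as!i))"
      unfolding F_def pp_def Rn_def using Rnn
      by (intro sum.cong refl) (simp add: power_divide prod_nonneg prod_dividef prod_power_distrib)
    also have "\<dots> = (\<Prod>i<n. \<Sum>a\<in>UNIV. (P (xs!i) a)^2 / R a)"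
      by (rule sum_seqs_prod)
    also have "\<dots> \<le> (\<Prod>i<n. c)"
      using Rc Rnn by (intro prod_mono conjI sum_nonneg divide_nonneg_nonneg) auto
    also have "(\<Prod>i<n. c) = c^n" by simp
    finally show ?thesis
      using c0 Rnnn fnn xs by (simp add: mult_right_mono sum_nonneg)
  qed
  have "(\<Sum>xs\<in>seqs n. (\<Sum>as\<in>seqs n. pp xs as * sqrt (f xs as))^2)
      \<le> (\<Sum>xs\<in>seqs n. c^n * (\<Sum>as\<in>seqs n. Rn as * f xs as))"
    using A by (intro sum_mono) auto
  also have "\<dots> = c^n * (\<Sum>xs\<in>seqs n. \<Sum>as\<in>seqs n. Rn as * f xs as)"
    by (simp add: sum_distrib_left)
  also have "(\<Sum>xs\<in>seqs n. \<Sum>as\<in>seqs n. Rn as * f xs as) = (\<Sum>as\<in>seqs n. \<Sum>xs\<in>seqs n. Rn as * f xs as)"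
    by (rule sum.swap)
  also have "\<dots> = (\<Sum>as\<in>seqs n. Rn as)"
    using fs by (intro sum.cong refl) (simp add: sum_distrib_left[symmetric])
  finally show ?thesis unfolding pp_def sumRn by simp
qed

lemma value_bound:
  fixes P :: "'x::finite \<Rightarrow> 'a::finite \<Rightarrow> real" and R :: "'a \<Rightarrow> real"
  assumes Pnn: "\<forall>x a. P x a \<ge> 0" and Rnn: "\<forall>a. R a \<ge> 0" and Rs: "(\<Sum>a\<in>UNIV. R a) = 1"
    and RP: "\<forall>x a. R a = 0 \<longrightarrow> P x a = 0" and Rc: "\<forall>x. (\<Sum>a\<in>UNIV. (P x a)^2 / R a) \<le> c"
    and NS: "no_signalling n Q"
  shows "(\<Sum>xs\<in>seqs n. \<Sum>as\<in>seqs n. \<Sum>bs\<in>seqs n. Pn P n xs as bs * Q xs xs as bs)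
          \<le> (c / real CARD('x))^n"
proof -
  define S where "S = (seqs n :: 'x list set)"
  define T where "T = (seqs n :: 'a list set)"
  define a0 where "a0 = replicate n (undefined::'a)"
  have a0T: "a0 \<in> T" unfolding a0_def T_def seqs_def by simp
  have Qnn: "\<And>y z a b. y \<in> S \<Longrightarrow> z \<in> S \<Longrightarrow> a \<in> T \<Longrightarrow> b \<in> T \<Longrightarrow> Q y z a b \<ge> 0"
    using NS unfolding no_signalling_def S_def T_def by blast
  have Qs: "\<And>a b. a \<in> T \<Longrightarrow> b \<in> T \<Longrightarrow> (\<Sum>y\<in>S. \<Sum>z\<in>S. Q y z a b) = 1"
    using NS unfolding no_signalling_def S_def T_def by blast
  have ns3: "\<And>z a a' b. z \<in> S \<Longrightarrow> a \<in> T \<Longrightarrow> a' \<in> T \<Longrightarrow> b \<in> T \<Longrightarrow>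
      (\<Sum>y\<in>S. Q y z a b) = (\<Sum>y\<in>S. Q y z a' b)"
    using NS unfolding no_signalling_def S_def T_def by blast
  have ns4: "\<And>y a b b'. y \<in> S \<Longrightarrow> a \<in> T \<Longrightarrow> b \<in> T \<Longrightarrow> b' \<in> T \<Longrightarrow>
      (\<Sum>z\<in>S. Q y z a b) = (\<Sum>z\<in>S. Q y z a b')"
    using NS unfolding no_signalling_def S_def T_def by blast
  define QA where "QA = (\<lambda>y as. \<Sum>z\<in>S. Q y z as a0)"
  define QB where "QB = (\<lambda>z bs. \<Sum>y\<in>S. Q y z a0 bs)"
  have QAnn: "\<forall>y\<in>S. \<forall>as\<in>T. QA y as \<ge> 0" unfolding QA_def using Qnn a0T by (auto intro: sum_nonneg)
  have QBnn: "\<forall>z\<in>S. \<forall>bs\<in>T. QB z bs \<ge> 0" unfolding QB_def using Qnn a0T by (auto intro: sum_nonneg)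
  have QAs: "\<forall>as\<in>T. (\<Sum>y\<in>S. QA y as) = 1" unfolding QA_def using Qs a0T by blast
  have QBs: "\<forall>bs\<in>T. (\<Sum>z\<in>S. QB z bs) = 1"
  proof
    fix bs assume bs: "bs \<in> T"
    have "(\<Sum>z\<in>S. QB z bs) = (\<Sum>y\<in>S. \<Sum>z\<in>S. Q y z a0 bs)" unfolding QB_def by (rule sum.swap)
    also have "\<dots> = 1" using Qs a0T bs by blast
    finally show "(\<Sum>z\<in>S. QB z bs) = 1" .
  qed
  have QleA: "Q x x as bs \<le> QA x as" if "x \<in> S" "as \<in> T" "bs \<in> T" for x as bs
  proof -
    have "Q x x as bs \<le> (\<Sum>z\<in>S. Q x z as bs)"
      using that Qnn by (intro member_le_sum) (auto simp: S_def)
    also have "\<dots> = QA x as" unfolding QA_def using ns4 that a0T by blast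
    finally show ?thesis .
  qed
  have QleB: "Q x x as bs \<le> QB x bs" if "x \<in> S" "as \<in> T" "bs \<in> T" for x as bs
  proof -
    have "Q x x as bs \<le> (\<Sum>y\<in>S. Q y x as bs)"
      using that Qnn by (intro member_le_sum[of x S "\<lambda>y. Q y x as bs"]) (auto simp: S_def)
    also have "\<dots> = QB x bs" unfolding QB_def using ns3 that a0T by blast
    finally show ?thesis .
  qed
  have Qle: "Q x x as bs \<le> sqrt (QA x as) * sqrt (QB x bs)" if "x \<in> S" "as \<in> T" "bs \<in> T" for x as bs
  proof -
    have "(Q x x as bs)^2 \<le> QA x as * QB x bs"
      unfolding power2_eq_square using QleA[OF that] QleB[OF that] Qnn[of x x as bs] that
      by (intro mult_mono) auto
    then have "Q x x as bs \<le> sqrt (QA x as * QB x bs)" by (rule real_le_rsqrt)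
    then show ?thesis by (simp add: real_sqrt_mult)
  qed
  define pp where "pp = (\<lambda>(xs::'x list) (as::'a list). \<Prod>i<n. P (xs!i) (as!i))"
  have ppnn: "\<And>xs as. pp xs as \<ge> 0" unfolding pp_def using Pnn by (intro prod_nonneg) auto
  define k where "k = (1 / real CARD('x))^n"
  have k0: "k \<ge> 0" unfolding k_def by simp
  have PnE: "Pn P n xs as bs = k * (pp xs as * pp xs bs)" for xs as bs
    unfolding Pn_def k_def pp_def by (simp add: prod.distrib)
  define u where "u = (\<lambda>xs. \<Sum>as\<in>T. pp xs as * sqrt (QA xs as))"
  define v where "v = (\<lambda>xs. \<Sum>bs\<in>T. pp xs bs * sqrt (QB xs bs))"
  have "(\<Sum>xs\<in>seqs n. \<Sum>as\<in>seqs n. \<Sum>bs\<in>seqs n. Pn P n xs as bs * Q xs xs as bs)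
      = (\<Sum>xs\<in>S. \<Sum>as\<in>T. \<Sum>bs\<in>T. k * (pp xs as * pp xs bs) * Q xs xs as bs)"
    unfolding S_def T_def PnE ..
  also have "\<dots> \<le> (\<Sum>xs\<in>S. \<Sum>as\<in>T. \<Sum>bs\<in>T. k * ((pp xs as * sqrt (QA xs as)) * (pp xs bs * sqrt (QB xs bs))))"
  proof (intro sum_mono)
    fix xs as bs assume h: "xs \<in> S" "as \<in> T" "bs \<in> T"
    have "k * (pp xs as * pp xs bs) * Q xs xs as bs \<le> k * (pp xs as * pp xs bs) * (sqrt (QA xs as) * sqrt (QB xs bs))"
      using Qle[OF h] k0 ppnn by (intro mult_left_mono) auto
    then show "k * (pp xs as * pp xs bs) * Q xs xs as bs \<le> k * ((pp xs as * sqrt (QA xs as)) * (pp xs bs * sqrt (QB xs bs)))"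
      by (simp add: algebra_simps)
  qed
  also have "\<dots> = (\<Sum>xs\<in>S. k * (u xs * v xs))"
    unfolding u_def v_def sum_product by (simp add: sum_distrib_left)
  also have "\<dots> = k * (\<Sum>xs\<in>S. u xs * v xs)"
    by (simp add: sum_distrib_left)
  also have "\<dots> \<le> k * (\<Sum>xs\<in>S. ((u xs)^2 + (v xs)^2) / 2)"
  proof (intro mult_left_mono[OF _ k0] sum_mono)
    fix xs
    have "0 \<le> (u xs - v xs)^2" by simp
    then show "u xs * v xs \<le> ((u xs)^2 + (v xs)^2) / 2" by (simp add: power2_eq_square algebra_simps)
  qed
  also have "\<dots> = k * (((\<Sum>xs\<in>S. (u xs)^2) + (\<Sum>xs\<in>S. (v xs)^2)) / 2)"
    by (simp only: sum_divide_distrib[symmetric] sum.distrib)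
  also have "\<dots> \<le> k * ((c^n + c^n) / 2)"
  proof -
    have "(\<Sum>xs\<in>S. (u xs)^2) \<le> c^n" unfolding u_def S_def T_def pp_def
      using lemK[OF Pnn Rnn Rs RP Rc, of n QA] QAnn QAs unfolding S_def T_def by blast
    moreover have "(\<Sum>xs\<in>S. (v xs)^2) \<le> c^n" unfolding v_def S_def T_def pp_def
      using lemK[OF Pnn Rnn Rs RP Rc, of n QB] QBnn QBs unfolding S_def T_def by blast
    ultimately show ?thesis using k0 by (intro mult_left_mono) auto
  qed
  also have "\<dots> = (c / real CARD('x))^n" unfolding k_def by (simp add: power_divide)
  finally show ?thesis .
qed

lemma omega_bounds:
  fixes P :: "'x::finite \<Rightarrow> 'a::finite \<Rightarrow> real" and R :: "'a \<Rightarrow> real"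
  assumes Pnn: "\<forall>x a. P x a \<ge> 0" and P1: "\<forall>x. (\<Sum>a\<in>UNIV. P x a) = 1"
    and Rnn: "\<forall>a. R a \<ge> 0" and Rs: "(\<Sum>a\<in>UNIV. R a) = 1"
    and RP: "\<forall>x a. R a = 0 \<longrightarrow> P x a = 0" and Rc: "\<forall>x. (\<Sum>a\<in>UNIV. (P x a)^2 / R a) \<le> c"
  shows "(1 / real CARD('x))^n \<le> omega_ns P n" and "omega_ns P n \<le> (c / real CARD('x))^n"
proof -
  define V where "V = {(\<Sum>xs\<in>seqs n. \<Sum>as\<in>seqs n. \<Sum>bs\<in>seqs n. Pn P n xs as bs * Q xs xs as bs)
                       | Q. no_signalling n Q}"
  have om: "omega_ns P n = Sup V" unfolding omega_ns_def V_def ..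
  have ub: "\<forall>v\<in>V. v \<le> (c / real CARD('x))^n"
    unfolding V_def using value_bound[OF Pnn Rnn Rs RP Rc] by blast
  define x0 where "x0 = replicate n (undefined::'x)"
  have x0S: "x0 \<in> seqs n" unfolding x0_def seqs_def by simp
  define Q0 where "Q0 = (\<lambda>(y::'x list) (z::'x list) (a::'a list) (b::'a list). if y = x0 \<and> z = x0 then (1::real) else 0)"
  have in1: "(\<Sum>z\<in>seqs n. Q0 y z a b) = (if y = x0 then 1 else 0)" for y a b
    using x0S unfolding Q0_def by (cases "y = x0") (simp_all add: sum.delta)
  have in2: "(\<Sum>y\<in>seqs n. Q0 y z a b) = (if z = x0 then 1 else 0)" for z a b
    using x0S unfolding Q0_def by (cases "z = x0") (simp_all add: sum.delta)
  have NS0: "no_signalling n Q0"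
    unfolding no_signalling_def in1 in2
  proof (intro conjI ballI)
    fix y z a b show "0 \<le> Q0 y z a b" unfolding Q0_def by simp
  next
    fix a b show "(\<Sum>y\<in>seqs n. if y = x0 then 1 else 0) = (1::real)" using x0S by (simp add: sum.delta)
  qed simp_all
  have ppone: "(\<Sum>as\<in>seqs n. \<Prod>i<n. P (x0!i) (as!i)) = 1"
    using sum_seqs_prod[of "\<lambda>i a. P (x0!i) a" n] P1 by simp
  have "(\<Sum>xs\<in>seqs n. \<Sum>as\<in>seqs n. \<Sum>bs\<in>seqs n. Pn P n xs as bs * Q0 xs xs as bs)
      = (\<Sum>as\<in>seqs n. \<Sum>bs\<in>seqs n. Pn P n x0 as bs)"
  proof -
    have "(\<Sum>xs\<in>seqs n. \<Sum>as\<in>seqs n. \<Sum>bs\<in>seqs n. Pn P n xs as bs * Q0 xs xs as bs)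
       = (\<Sum>xs\<in>seqs n. if xs = x0 then (\<Sum>as\<in>seqs n. \<Sum>bs\<in>seqs n. Pn P n xs as bs) else 0)"
      unfolding Q0_def by (intro sum.cong refl) auto
    also have "\<dots> = (\<Sum>as\<in>seqs n. \<Sum>bs\<in>seqs n. Pn P n x0 as bs)"
      using x0S by (simp add: sum.delta)
    finally show ?thesis .
  qed
  also have "\<dots> = (1 / real CARD('x))^n * ((\<Sum>as\<in>seqs n. \<Prod>i<n. P (x0!i) (as!i)) * (\<Sum>bs\<in>seqs n. \<Prod>i<n. P (x0!i) (bs!i)))"
    unfolding Pn_def prod.distrib sum_product by (simp add: sum_distrib_left)
  also have "\<dots> = (1 / real CARD('x))^n" using ppone by simp
  finally have hv: "(\<Sum>xs\<in>seqs n. \<Sum>as\<in>seqs n. \<Sum>bs\<in>seqs n. Pn P n xs as bs * Q0 xs xs as bs) = (1 / real CARD('x))^n" .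
  have "(1 / real CARD('x))^n \<in> V" unfolding V_def mem_Collect_eq
    by (rule exI[of _ Q0], rule conjI[OF hv[symmetric] NS0])
  moreover have bdd: "bdd_above V" using ub by (auto simp: bdd_above_def)
  ultimately show "(1 / real CARD('x))^n \<le> omega_ns P n" unfolding om by (rule cSup_upper)
  have "V \<noteq> {}" using \<open>(1 / real CARD('x))^n \<in> V\<close> by blast
  then show "omega_ns P n \<le> (c / real CARD('x))^n" unfolding om using ub by (intro cSup_least) auto
qed

theorem mainTheorem3:
  fixes P :: "'x::finite \<Rightarrow> 'a::finite \<Rightarrow> real"
  assumes "channel P"
  shows "limsup (\<lambda>n. ereal (log 2 (omega_ns P n) / real n)) \<le>
    (SUP Q\<in>{Q. pdist Q \<and> abs_cont Q P}. ereal (mutual_info Q - 2 * cond_rel_entropy Q P))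
      - ereal (log 2 (real CARD('x)))"
proof -
  have Pnn: "\<forall>x a. P x a \<ge> 0" and P1: "\<forall>x. (\<Sum>a\<in>UNIV. P x a) = 1"
    using assms unfolding channel_def by auto
  obtain p where pd: "pdist p" and mx: "\<forall>q. pdist q \<longrightarrow> phi P q \<le> phi P p"
    using exists_max[of P] by blast
  define ph where "ph = phi P p"
  define r where "r = (\<lambda>a. sqrt (Bv P p a))"
  define Qs where "Qs = (\<lambda>(x,a). p x * (P x a)^2 / (ph * r a))"
  note QP = Q_props[OF Pnn P1 pd mx]
  have php: "ph > 0" using QP(1) unfolding ph_def .
  have Qpd: "pdist Qs" using QP(2) unfolding Qs_def ph_def r_def .
  have Qac: "abs_cont Qs P" using QP(3) unfolding Qs_def ph_def r_def .
  have Fv: "mutual_info Qs - 2 * cond_rel_entropy Qs P = 2 * log 2 ph"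
    using QP(4) unfolding Qs_def ph_def r_def .
  have Bnn: "\<And>a. Bv P p a \<ge> 0" unfolding Bv_def using Pnn pd unfolding pdist_def by (intro sum_nonneg) auto
  have rnn: "\<And>a. r a \<ge> 0" unfolding r_def using Bnn by simp
  define R where "R = (\<lambda>a. r a / ph)"
  have Rnn: "\<forall>a. R a \<ge> 0" unfolding R_def using rnn php by simp
  have sr: "(\<Sum>a\<in>UNIV. r a) = ph" unfolding r_def ph_def phi_def ..
  have Rs: "(\<Sum>a\<in>UNIV. R a) = 1" unfolding R_def using sr php by (simp add: sum_divide_distrib[symmetric])
  have RP: "\<forall>x a. R a = 0 \<longrightarrow> P x a = 0"
  proof (intro allI impI)
    fix x a assume "R a = 0"
    then have "r a = 0" unfolding R_def using php by simp
    then have "Bv P p a = 0" unfolding r_def using Bnn[of a] by simp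
    then show "P x a = 0" using first_order_a[OF Pnn pd mx] by blast
  qed
  have Rc: "\<forall>x. (\<Sum>a\<in>UNIV. (P x a)^2 / R a) \<le> ph * ph"
  proof
    fix x
    have "(\<Sum>a\<in>UNIV. (P x a)^2 / R a) = ph * (\<Sum>a\<in>UNIV. (P x a)^2 / r a)"
      unfolding R_def by (simp add: sum_distrib_left mult.commute)
    also have "\<dots> \<le> ph * ph"
      using first_order_b[OF Pnn pd mx, of x] php unfolding r_def ph_def by (intro mult_left_mono) auto
    finally show "(\<Sum>a\<in>UNIV. (P x a)^2 / R a) \<le> ph * ph" .
  qed
  note OB = omega_bounds[OF Pnn P1 Rnn Rs RP Rc]
  define N where "N = real CARD('x)"
  have N0: "N > 0" unfolding N_def by simp
  define L where "L = log 2 (ph * ph / N)"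
  have ev: "\<forall>n\<ge>1. ereal (log 2 (omega_ns P n) / real n) \<le> ereal L"
  proof (intro allI impI)
    fix n :: nat assume n1: "n \<ge> 1"
    have w0: "omega_ns P n > 0"
      using OB(1)[of n] N0 unfolding N_def by (meson less_le_trans zero_less_divide_1_iff zero_less_power)
    have "log 2 (omega_ns P n) \<le> log 2 ((ph * ph / N)^n)"
      using OB(2)[of n] w0 unfolding N_def by (intro log_mono) auto
    also have "\<dots> = real n * L" unfolding L_def using php N0 by (simp add: log_nat_power)
    finally have "log 2 (omega_ns P n) \<le> L * real n" by (simp add: mult.commute)
    then have "log 2 (omega_ns P n) / real n \<le> L" using n1 by (simp add: pos_divide_le_eq)
    then show "ereal (log 2 (omega_ns P n) / real n) \<le> ereal L" by simp
  qed
  have "limsup (\<lambda>n. ereal (log 2 (omega_ns P n) / real n)) \<le> ereal L"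
    by (rule Limsup_bounded) (use ev in \<open>auto simp: eventually_sequentially\<close>)
  also have "ereal L = ereal (2 * log 2 ph) - ereal (log 2 (real CARD('x)))"
  proof -
    have "L = log 2 (ph * ph) - log 2 N" unfolding L_def using php N0 by (simp add: log_divide_pos)
    also have "log 2 (ph * ph) = 2 * log 2 ph" using php by (simp add: log_mult_pos)
    finally show ?thesis unfolding N_def by simp
  qed
  also have "\<dots> \<le> (SUP Q\<in>{Q. pdist Q \<and> abs_cont Q P}. ereal (mutual_info Q - 2 * cond_rel_entropy Q P))
      - ereal (log 2 (real CARD('x)))"
  proof (rule ereal_minus_mono[OF _ order_refl])
    have "Qs \<in> {Q. pdist Q \<and> abs_cont Q P}" using Qpd Qac by simp
    then have "ereal (mutual_info Qs - 2 * cond_rel_entropy Qs P)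
        \<le> (SUP Q\<in>{Q. pdist Q \<and> abs_cont Q P}. ereal (mutual_info Q - 2 * cond_rel_entropy Q P))"
      by (rule SUP_upper)
    then show "ereal (2 * log 2 ph) \<le> (SUP Q\<in>{Q. pdist Q \<and> abs_cont Q P}. ereal (mutual_info Q - 2 * cond_rel_entropy Q P))"
      unfolding Fv .
  qed
  finally show ?thesis .
qed

end
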